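(* Let $S$ be a commutative semigroup and $H$ a subsemigroup of $S$. Let $\{H_i : i\in I\}$ be a nonempty family ($I\neq\emptyset$) of subsets of $S$ such that $H=\bigcap_{i\in I}\mathrm{Sep}\,H_i$. Then the relation $$P(H;H_i,I)=\{(a,b)\in S\times S:\ H_i\dots a=H_i\dots b \text{ for all } i\in I\}$$ is a monoid congruence on $S$ such that $H$ is a congruence class and is the identity element of the factor semigroup $S/P(H;H_i,I)$. Conversely, for every monoid congruence $p$ on a commutative semigroup $S$ there exist a subsemigroup $H$ of $S$ and a nonempty family $\{H_i: i\in I\}$ of subsets of $S$ with $H=\bigcap_{i\in I}\mathrm{Sep}\,H_i$ such that $p=P(H;H_i,I)$.
   Context: For a semigroup $S$ and $A\subseteq S$, $\mathrm{Sep}\,A$ (the separator of $A$) is the set of all $x\in S$ with $xA\subseteq A$, $Ax\subseteq A$, $x(S\setminus A)\subseteq S\setminus A$ and $(S\setminus A)x\subseteq S\setminus A$. For $A\subseteq S$ and $a\in S$, $A\dots a=\{(x,y)\in S\times S:\ xay\in A\}$. A congruence $p$ on $S$ is a monoid congruence if the factor semigroup $S/p$ is a monoid (has an identity element). *)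

theory Defs
  imports Main
begin

text \<open>The commutative semigroup S is the whole carrier type 'a of class ab_semigroup_mult.\<close>

definition subsemigroup :: "'a::semigroup_mult set \<Rightarrow> bool" where
  "subsemigroup H \<longleftrightarrow> H \<noteq> {} \<and> (\<forall>x\<in>H. \<forall>y\<in>H. x * y \<in> H)"

definition Sep :: "'a::semigroup_mult set \<Rightarrow> 'a set" where
  "Sep A = {x. (\<forall>a\<in>A. x * a \<in> A \<and> a * x \<in> A) \<and>
               (\<forall>a\<in>-A. x * a \<in> -A \<and> a * x \<in> -A)}"

definition dots :: "'a::semigroup_mult set \<Rightarrow> 'a \<Rightarrow> ('a \<times> 'a) set" where
  "dots A a = {(x, y). x * a * y \<in> A}"

definition congruence :: "('a::semigroup_mult \<times> 'a) set \<Rightarrow> bool" where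
  "congruence p \<longleftrightarrow> equiv UNIV p \<and>
     (\<forall>a b c. (a, b) \<in> p \<longrightarrow> (c * a, c * b) \<in> p \<and> (a * c, b * c) \<in> p)"

text \<open>The factor semigroup S/p has an identity element (the class of e).\<close>
definition monoid_congruence :: "('a::semigroup_mult \<times> 'a) set \<Rightarrow> bool" where
  "monoid_congruence p \<longleftrightarrow> congruence p \<and>
     (\<exists>e. \<forall>a. (e * a, a) \<in> p \<and> (a * e, a) \<in> p)"

definition identity_class :: "('a::semigroup_mult \<times> 'a) set \<Rightarrow> 'a set \<Rightarrow> bool" where
  "identity_class p H \<longleftrightarrow> H \<in> UNIV // p \<and>
     (\<forall>h\<in>H. \<forall>a. (h * a, a) \<in> p \<and> (a * h, a) \<in> p)"

definition Prel :: "'a::semigroup_mult set \<Rightarrow> ('i \<Rightarrow> 'a set) \<Rightarrow> 'i set \<Rightarrow> ('a \<times> 'a) set" where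
  "Prel H Hs I = {(a, b). \<forall>i\<in>I. dots (Hs i) a = dots (Hs i) b}"

end

theory Submission
  imports Defs
begin

lemma dots_eq_iff: "dots A a = dots A b \<longleftrightarrow> (\<forall>x y. x*a*y \<in> A \<longleftrightarrow> x*b*y \<in> A)"
  unfolding dots_def by (auto simp: set_eq_iff)

lemma Sep_iff: "x \<in> Sep A \<Longrightarrow> (x*z \<in> A \<longleftrightarrow> z \<in> A)"
  unfolding Sep_def by auto

lemma Prel_iff: "(a,b) \<in> Prel H Hs I \<longleftrightarrow> (\<forall>i\<in>I. \<forall>x y. x*a*y \<in> Hs i \<longleftrightarrow> x*b*y \<in> Hs i)"
  unfolding Prel_def by (simp add: dots_eq_iff)

lemma part1:
  fixes H :: "'a::ab_semigroup_mult set" and Hs :: "'i \<Rightarrow> 'a set"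
  assumes sub: "subsemigroup H" and I: "I \<noteq> {}" and HS: "H = (\<Inter>i\<in>I. Sep (Hs i))"
  shows "monoid_congruence (Prel H Hs I) \<and> identity_class (Prel H Hs I) H"
proof -
  let ?P = "Prel H Hs I"
  have eq: "equiv UNIV ?P"
    by (rule equivI) (auto simp: refl_on_def sym_def trans_def Prel_iff)
  have comp: "(c * a, c * b) \<in> ?P \<and> (a * c, b * c) \<in> ?P" if "(a,b) \<in> ?P" for a b c
  proof -
    have L: "(c * a, c * b) \<in> ?P"
      unfolding Prel_iff
    proof (intro ballI allI)
      fix i x y assume "i \<in> I"
      with that have "(x*c)*a*y \<in> Hs i \<longleftrightarrow> (x*c)*b*y \<in> Hs i" unfolding Prel_iff by blast
      then show "x*(c*a)*y \<in> Hs i \<longleftrightarrow> x*(c*b)*y \<in> Hs i" by (simp add: mult.assoc)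
    qed
    then show ?thesis by (simp add: mult.commute)
  qed
  have ident: "(h * a, a) \<in> ?P \<and> (a * h, a) \<in> ?P" if "h \<in> H" for h a
  proof -
    have "(h * a, a) \<in> ?P"
      unfolding Prel_iff
    proof (intro ballI allI)
      fix i x y assume "i \<in> I"
      with that HS have hs: "h \<in> Sep (Hs i)" by blast
      have "x*(h*a)*y = h*(x*a*y)" by (simp add: ac_simps)
      then show "x*(h*a)*y \<in> Hs i \<longleftrightarrow> x*a*y \<in> Hs i" using Sep_iff[OF hs] by simp
    qed
    then show ?thesis by (simp add: mult.commute)
  qed
  obtain h0 where h0: "h0 \<in> H" using sub unfolding subsemigroup_def by blast
  have mc: "monoid_congruence ?P"
    unfolding monoid_congruence_def congruence_def using eq comp ident h0 by blast
  have cls: "H = ?P `` {h0}"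
  proof
    show "H \<subseteq> ?P `` {h0}"
    proof
      fix h assume h: "h \<in> H"
      have "(h0, h) \<in> ?P"
        unfolding Prel_iff
      proof (intro ballI allI)
        fix i x y assume "i \<in> I"
        with h h0 HS have s1: "h \<in> Sep (Hs i)" and s2: "h0 \<in> Sep (Hs i)" by blast+
        have "x*h0*y = h0*(x*y)" "x*h*y = h*(x*y)" by (simp_all add: ac_simps)
        then show "x*h0*y \<in> Hs i \<longleftrightarrow> x*h*y \<in> Hs i" using Sep_iff[OF s1] Sep_iff[OF s2] by simp
      qed
      then show "h \<in> ?P `` {h0}" by simp
    qed
  next
    show "?P `` {h0} \<subseteq> H"
    proof
      fix b assume "b \<in> ?P `` {h0}"
      then have hb: "(h0, b) \<in> ?P" by simp
      have "b \<in> Sep (Hs i)" if i: "i \<in> I" for i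
      proof -
        from i h0 HS have s: "h0 \<in> Sep (Hs i)" by blast
        have key: "b*z \<in> Hs i \<longleftrightarrow> z \<in> Hs i" for z
        proof -
          have "h0*h0*z \<in> Hs i \<longleftrightarrow> h0*b*z \<in> Hs i" using hb i unfolding Prel_iff by blast
          moreover have "h0*h0*z \<in> Hs i \<longleftrightarrow> z \<in> Hs i" using Sep_iff[OF s, of "h0*z"] Sep_iff[OF s, of z]
            by (simp add: mult.assoc)
          moreover have "h0*b*z \<in> Hs i \<longleftrightarrow> b*z \<in> Hs i" using Sep_iff[OF s, of "b*z"] by (simp add: mult.assoc)
          ultimately show ?thesis by simp
        qed
        show ?thesis unfolding Sep_def using key by (auto simp: mult.commute)
      qed
      then show "b \<in> H" using HS by blast
    qed
  qed
  have "H \<in> UNIV // ?P" unfolding quotient_def using cls by blast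
  with mc ident show ?thesis unfolding identity_class_def by blast
qed

lemma part2:
  fixes p :: "('a::ab_semigroup_mult \<times> 'a) set"
  assumes mc: "monoid_congruence p"
  shows "\<exists>H (Hs :: 'a set \<Rightarrow> 'a set) (I :: 'a set set).
               subsemigroup H \<and> I \<noteq> {} \<and> H = (\<Inter>i\<in>I. Sep (Hs i)) \<and> p = Prel H Hs I"
proof -
  from mc obtain e where e: "\<And>a. (e*a, a) \<in> p \<and> (a*e, a) \<in> p"
    unfolding monoid_congruence_def by blast
  from mc have eq: "equiv UNIV p" and cg: "\<And>a b c. (a,b) \<in> p \<Longrightarrow> (c*a, c*b) \<in> p \<and> (a*c, b*c) \<in> p"
    unfolding monoid_congruence_def congruence_def by blast+
  have rf: "(a,a) \<in> p" for a using eq unfolding equiv_def refl_on_def by blast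
  have sy: "(a,b) \<in> p \<Longrightarrow> (b,a) \<in> p" for a b using eq unfolding equiv_def sym_def by blast
  have tr: "(a,b) \<in> p \<Longrightarrow> (b,c) \<in> p \<Longrightarrow> (a,c) \<in> p" for a b c using eq unfolding equiv_def trans_def by blast
  define H where "H = p `` {e}"
  define I where "I = UNIV // p"
  have cls: "C \<in> I \<Longrightarrow> (z \<in> C \<longleftrightarrow> w \<in> C)" if "(z,w) \<in> p" for C z w
  proof -
    assume "C \<in> I"
    then obtain x where C: "C = p `` {x}" unfolding I_def quotient_def by blast
    show ?thesis unfolding C using that sy tr by blast
  qed
  have sub: "subsemigroup H"
    unfolding subsemigroup_def H_def
  proof (intro conjI ballI)
    show "p `` {e} \<noteq> {}" using rf by blast
  next
    fix x y assume "x \<in> p `` {e}" "y \<in> p `` {e}"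
    then have x: "(e,x) \<in> p" and y: "(e,y) \<in> p" by auto
    have "(e*e, x*e) \<in> p" using cg[OF x] by blast
    moreover have "(x*e, x*y) \<in> p" using cg[OF y] by blast
    ultimately have "(e*e, x*y) \<in> p" using tr by blast
    moreover have "(e, e*e) \<in> p" using e sy by blast
    ultimately show "x*y \<in> p `` {e}" using tr by blast
  qed
  have HS: "H = (\<Inter>C\<in>I. Sep (id C))"
  proof
    show "H \<subseteq> (\<Inter>C\<in>I. Sep (id C))"
    proof (intro subsetI INT_I)
      fix h C assume h: "h \<in> H" and C: "C \<in> I"
      have "(h*a, a) \<in> p" for a
      proof -
        have "(e,h) \<in> p" using h H_def by simp
        then have "(h*a, e*a) \<in> p" using cg sy by blast
        then show ?thesis using e tr by blast
      qed
      then have "h*a \<in> C \<longleftrightarrow> a \<in> C" for a using cls[OF _ C] by blast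
      then show "h \<in> Sep (id C)" unfolding Sep_def by (auto simp: mult.commute)
    qed
  next
    show "(\<Inter>C\<in>I. Sep (id C)) \<subseteq> H"
    proof
      fix h assume "h \<in> (\<Inter>C\<in>I. Sep (id C))"
      moreover have "H \<in> I" unfolding H_def I_def quotient_def by blast
      ultimately have s: "h \<in> Sep H" by auto
      have "e \<in> H" unfolding H_def using rf by blast
      then have "h*e \<in> H" using Sep_iff[OF s] by blast
      then have "(e, h*e) \<in> p" unfolding H_def by simp
      then show "h \<in> H" unfolding H_def using e tr by blast
    qed
  qed
  have PP: "p = Prel H id I"
  proof (rule set_eqI, clarify)
    fix a b
    show "(a,b) \<in> p \<longleftrightarrow> (a,b) \<in> Prel H id I"
    proof
      assume ab: "(a,b) \<in> p"
      show "(a,b) \<in> Prel H id I" unfolding Prel_iff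
      proof (intro ballI allI)
        fix C x y assume C: "C \<in> I"
        have "(x*a, x*b) \<in> p" using cg[OF ab] by blast
        then have "(x*a*y, x*b*y) \<in> p" using cg by blast
        then show "x*a*y \<in> id C \<longleftrightarrow> x*b*y \<in> id C" using cls[OF _ C] by simp
      qed
    next
      assume ab: "(a,b) \<in> Prel H id I"
      let ?C = "p `` {e*a*e}"
      have C: "?C \<in> I" unfolding I_def quotient_def by blast
      have "e*a*e \<in> ?C" using rf by blast
      then have "e*b*e \<in> ?C" using ab C unfolding Prel_iff by auto
      then have 1: "(e*a*e, e*b*e) \<in> p" by simp
      have 2: "(e*a*e, a) \<in> p" using e[of "e*a"] e[of a] tr by blast
      have 3: "(e*b*e, b) \<in> p" using e[of "e*b"] e[of b] tr by blast
      show "(a,b) \<in> p" using 1 2 3 sy tr by blast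
    qed
  qed
  have "I \<noteq> {}" unfolding I_def quotient_def by blast
  then show ?thesis using sub HS PP by (intro exI[of _ H] exI[of _ id] exI[of _ I]) simp
qed

theorem theorem3:
  shows "(\<forall>(H::'a::ab_semigroup_mult set) (Hs :: 'i \<Rightarrow> 'a set) I.
            subsemigroup H \<and> I \<noteq> {} \<and> H = (\<Inter>i\<in>I. Sep (Hs i)) \<longrightarrow>
            monoid_congruence (Prel H Hs I) \<and> identity_class (Prel H Hs I) H)
       \<and> (\<forall>p :: ('a \<times> 'a) set. monoid_congruence p \<longrightarrow>
            (\<exists>H (Hs :: 'a set \<Rightarrow> 'a set) (I :: 'a set set).
               subsemigroup H \<and> I \<noteq> {} \<and> H = (\<Inter>i\<in>I. Sep (Hs i)) \<and> p = Prel H Hs I))"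
proof (rule conjI)
  show "\<forall>(H::'a set) (Hs :: 'i \<Rightarrow> 'a set) I.
            subsemigroup H \<and> I \<noteq> {} \<and> H = (\<Inter>i\<in>I. Sep (Hs i)) \<longrightarrow>
            monoid_congruence (Prel H Hs I) \<and> identity_class (Prel H Hs I) H"
  proof (intro allI impI)
    fix H :: "'a set" and Hs :: "'i \<Rightarrow> 'a set" and I
    assume a: "subsemigroup H \<and> I \<noteq> {} \<and> H = (\<Inter>i\<in>I. Sep (Hs i))"
    show "monoid_congruence (Prel H Hs I) \<and> identity_class (Prel H Hs I) H"
      using part1[of H I Hs] a by (elim conjE) assumption
  qed
  show "\<forall>p :: ('a \<times> 'a) set. monoid_congruence p \<longrightarrow>
            (\<exists>H (Hs :: 'a set \<Rightarrow> 'a set) (I :: 'a set set).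
               subsemigroup H \<and> I \<noteq> {} \<and> H = (\<Inter>i\<in>I. Sep (Hs i)) \<and> p = Prel H Hs I)"
    using part2 by (intro allI impI) assumption
qed

end
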